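(* Let $G$ be a finite simple graph with $n$ vertices $v_1,\dots,v_n$, let $\bar{\bar{d}}=\sqrt{\frac{d(v_1)^2+\cdots+d(v_n)^2}{n}}$, and let $\omega(G)$ be the clique number of $G$. Suppose $$\omega(G)=\frac{n}{n-\bar{\bar{d}}}.$$ Then $G$ is a regular complete $\omega(G)$-partite graph (i.e. a complete $\omega(G)$-chromatic graph which is regular, so its $\omega(G)$ parts all have size $n/\omega(G)$).
   Context: All graphs are finite, undirected, without loops or multiple edges; $d(v)$ denotes the degree of vertex $v$. *)

theory Defs
  imports Complex_Main "HOL-Library.Disjoint_Sets"
begin

definition simple_graph :: "'a set \<Rightarrow> ('a \<Rightarrow> 'a \<Rightarrow> bool) \<Rightarrow> bool" where
  "simple_graph V E \<longleftrightarrow> finite V \<and> (\<forall>x y. E x y \<longrightarrow> x \<in> V \<and> y \<in> V)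
     \<and> (\<forall>x y. E x y \<longrightarrow> E y x) \<and> (\<forall>x. \<not> E x x)"

definition degree :: "'a set \<Rightarrow> ('a \<Rightarrow> 'a \<Rightarrow> bool) \<Rightarrow> 'a \<Rightarrow> nat" where
  "degree V E v = card {u \<in> V. E v u}"

definition is_clique :: "'a set \<Rightarrow> ('a \<Rightarrow> 'a \<Rightarrow> bool) \<Rightarrow> 'a set \<Rightarrow> bool" where
  "is_clique V E C \<longleftrightarrow> C \<subseteq> V \<and> (\<forall>x\<in>C. \<forall>y\<in>C. x \<noteq> y \<longrightarrow> E x y)"

definition clique_number :: "'a set \<Rightarrow> ('a \<Rightarrow> 'a \<Rightarrow> bool) \<Rightarrow> nat" where
  "clique_number V E = Max {card C | C. is_clique V E C}"

definition quad_mean_degree :: "'a set \<Rightarrow> ('a \<Rightarrow> 'a \<Rightarrow> bool) \<Rightarrow> real" where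
  "quad_mean_degree V E = sqrt ((\<Sum>v\<in>V. (real (degree V E v))^2) / real (card V))"

definition regular :: "'a set \<Rightarrow> ('a \<Rightarrow> 'a \<Rightarrow> bool) \<Rightarrow> bool" where
  "regular V E \<longleftrightarrow> (\<exists>r. \<forall>v\<in>V. degree V E v = r)"

definition complete_multipartite :: "'a set \<Rightarrow> ('a \<Rightarrow> 'a \<Rightarrow> bool) \<Rightarrow> nat \<Rightarrow> bool" where
  "complete_multipartite V E k \<longleftrightarrow> (\<exists>P. partition_on V P \<and> card P = k
     \<and> (\<forall>X\<in>P. \<forall>x\<in>X. \<forall>y\<in>X. \<not> E x y)
     \<and> (\<forall>X\<in>P. \<forall>Y\<in>P. X \<noteq> Y \<longrightarrow> (\<forall>x\<in>X. \<forall>y\<in>Y. E x y)))"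

end

theory Submission
  imports Defs
begin

definition Bf :: "'a set \<Rightarrow> ('a \<Rightarrow> 'a \<Rightarrow> bool) \<Rightarrow> ('a \<Rightarrow> real) \<Rightarrow> ('a \<Rightarrow> real) \<Rightarrow> real" where
  "Bf V E x y = (\<Sum>a\<in>V. \<Sum>b\<in>V. if E a b then x a * y b else 0)"

lemma Bf_expand:
  "Bf V E (\<lambda>w. x w + t * f w) (\<lambda>w. y w + s * g w) =
   Bf V E x y + s * Bf V E x g + t * Bf V E f y + t * s * Bf V E f g"
proof -
  have "\<And>a b. (if E a b then (x a + t * f a) * (y b + s * g b) else 0) =
     (if E a b then x a * y b else 0) + s * (if E a b then x a * g b else 0)
     + t * (if E a b then f a * y b else 0) + t * s * (if E a b then f a * g b else 0)"
    by (simp add: algebra_simps)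
  then show ?thesis
    by (simp add: Bf_def sum.distrib sum_distrib_left)
qed

lemma Bf_scale:
  "Bf V E (\<lambda>w. t * f w) (\<lambda>w. s * g w) = t * s * Bf V E f g"
proof -
  have "\<And>a b. (if E a b then (t * f a) * (s * g b) else 0) =
     t * s * (if E a b then f a * g b else 0)"
    by (simp add: algebra_simps)
  then show ?thesis
    by (simp add: Bf_def sum.distrib sum_distrib_left)
qed

lemma Bf_sym:
  assumes "\<And>a b. E a b \<Longrightarrow> E b a"
  shows "Bf V E x y = Bf V E y x"
proof -
  have "Bf V E x y = (\<Sum>b\<in>V. \<Sum>a\<in>V. if E a b then x a * y b else 0)"
    unfolding Bf_def by (rule sum.swap)
  also have "\<dots> = Bf V E y x" unfolding Bf_def
    by (intro sum.cong refl) (use assms in \<open>auto simp: mult.commute\<close>)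
  finally show ?thesis .
qed

lemma Bf_ff:
  assumes G: "simple_graph V E" and uv: "u \<in> V" "v \<in> V"
  shows "Bf V E (\<lambda>w. (if w = u then 1 else 0) - (if w = v then 1 else 0))
                 (\<lambda>w. (if w = u then 1 else 0) - (if w = v then 1 else 0)) = 
         (if E u v then -2 else 0)"
proof -
  have fin: "finite V" using G by (simp add: simple_graph_def)
  have sym: "\<And>a b. E a b \<Longrightarrow> E b a" and irr: "\<And>a. \<not> E a a"
    using G by (auto simp: simple_graph_def)
  let ?f = "\<lambda>w::'a. (if w = u then 1 else 0) - (if w = v then (1::real) else 0)"
  have inner: "\<And>a. (\<Sum>b\<in>V. if E a b then ?f a * ?f b else 0) =
     ?f a * ((if E a u then 1 else 0) - (if E a v then 1 else 0))"
  proof -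
    fix a
    have "\<And>b. (if E a b then ?f a * ?f b else 0) = ?f a * ((if b = u then (if E a u then 1 else 0) else 0) - (if b = v then (if E a v then 1 else 0) else 0))"
      by auto
    then show "(\<Sum>b\<in>V. if E a b then ?f a * ?f b else 0) =
     ?f a * ((if E a u then 1 else 0) - (if E a v then 1 else 0))"
      using fin uv by (simp add: sum_subtractf sum_distrib_left[symmetric])
  qed
  have "Bf V E ?f ?f = (\<Sum>a\<in>V. ?f a * ((if E a u then 1 else 0) - (if E a v then 1 else 0)))"
    unfolding Bf_def using inner by simp
  also have "\<dots> = (\<Sum>a\<in>V. (if a = u then ((if E u u then 1 else 0) - (if E u v then 1 else 0)) else 0)
        - (if a = v then ((if E v u then 1 else 0) - (if E v v then 1 else 0)) else 0))"
    by (intro sum.cong refl) auto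
  also have "\<dots> = (if E u v then -2 else 0)"
    using fin uv irr sym by (simp add: sum_subtractf)
  finally show ?thesis .
qed

lemma var_id:
  fixes f :: "'b \<Rightarrow> real"
  assumes "finite A" "A \<noteq> {}"
  shows "real (card A) * (\<Sum>a\<in>A. (f a - (\<Sum>b\<in>A. f b) / real (card A))^2)
       = real (card A) * (\<Sum>a\<in>A. (f a)^2) - (\<Sum>a\<in>A. f a)^2"
proof -
  define m where "m = (\<Sum>b\<in>A. f b) / real (card A)"
  have c: "real (card A) > 0" using assms by auto
  have "(\<Sum>a\<in>A. (f a - m)^2) = (\<Sum>a\<in>A. (f a)^2) - 2 * m * (\<Sum>a\<in>A. f a) + real (card A) * m^2"
  proof -
    have h: "(\<Sum>a\<in>A. 2 * f a * m) = (\<Sum>a\<in>A. f a) * (2 * m)" by (simp add: sum_distrib_right sum_distrib_left mult_ac)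
    show ?thesis by (simp add: power2_diff sum_subtractf sum.distrib h)
  qed
  then show ?thesis using c unfolding m_def[symmetric] by (simp add: m_def field_simps power2_eq_square)
qed

lemma cs_sum:
  fixes f :: "'b \<Rightarrow> real"
  assumes "finite A"
  shows "(\<Sum>a\<in>A. f a)^2 \<le> real (card A) * (\<Sum>a\<in>A. (f a)^2)"
proof (cases "A = {}")
  case True then show ?thesis by simp
next
  case False
  have "0 \<le> real (card A) * (\<Sum>a\<in>A. (f a - (\<Sum>b\<in>A. f b) / real (card A))^2)"
    by (intro mult_nonneg_nonneg sum_nonneg) auto
  then show ?thesis using var_id[OF assms False, of f] by linarith
qed

lemma clique_fin:
  assumes G: "simple_graph V E"
  shows "finite {card C | C. is_clique V E C}"
proof -
  have fin: "finite V" using G by (simp add: simple_graph_def)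
  have "{card C | C. is_clique V E C} \<subseteq> {..card V}"
    using fin by (auto simp: is_clique_def intro: card_mono)
  then show ?thesis by (rule finite_subset) simp
qed

lemma clique_le:
  assumes G: "simple_graph V E" and C: "is_clique V E C"
  shows "card C \<le> clique_number V E"
  unfolding clique_number_def using clique_fin[OF G] C by (auto intro: Max_ge)

lemma clique_ge1:
  assumes G: "simple_graph V E" and "V \<noteq> {}"
  shows "1 \<le> clique_number V E"
proof -
  obtain v where "v \<in> V" using assms by auto
  then have "is_clique V E {v}" by (simp add: is_clique_def)
  from clique_le[OF G this] show ?thesis by simp
qed

lemma MS:
  assumes G: "simple_graph V E" and ne: "V \<noteq> {}" and nn: "\<forall>v. x v \<ge> 0"
  shows "Bf V E x x \<le> (1 - 1 / real (clique_number V E)) * (\<Sum>v\<in>V. x v)^2"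
  using nn
proof (induction "card {v\<in>V. x v \<noteq> 0}" arbitrary: x rule: less_induct)
  case less
  have fin: "finite V" using G by (simp add: simple_graph_def)
  have sym: "\<And>a b. E a b \<Longrightarrow> E b a" and irr: "\<And>a. \<not> E a a"
    using G by (auto simp: simple_graph_def)
  define \<omega> where "\<omega> = clique_number V E"
  have om1: "1 \<le> \<omega>" using clique_ge1[OF G ne] by (simp add: \<omega>_def)
  define S where "S = {v\<in>V. x v \<noteq> 0}"
  have finS: "finite S" using fin by (simp add: S_def)
  show ?case
  proof (cases "is_clique V E S")
    case True
    have k: "card S \<le> \<omega>" using clique_le[OF G True] by (simp add: \<omega>_def)
    have eq: "\<And>a b. a \<in> V \<Longrightarrow> b \<in> V \<Longrightarrow> (if E a b then x a * x b else 0) = x a * x b - (if a = b then x a * x b else 0)"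
      using True irr unfolding is_clique_def S_def by auto
    have "Bf V E x x = (\<Sum>a\<in>V. \<Sum>b\<in>V. x a * x b) - (\<Sum>a\<in>V. (x a)^2)"
      unfolding Bf_def using fin
      by (simp add: eq sum_subtractf power2_eq_square cong: sum.cong)
    also have "(\<Sum>a\<in>V. \<Sum>b\<in>V. x a * x b) = (\<Sum>v\<in>V. x v)^2"
      by (simp add: power2_eq_square sum_product)
    finally have B: "Bf V E x x = (\<Sum>v\<in>V. x v)^2 - (\<Sum>a\<in>V. (x a)^2)" .
    have s1: "(\<Sum>v\<in>V. x v) = (\<Sum>v\<in>S. x v)"
      unfolding S_def using fin by (intro sum.mono_neutral_right) auto
    have s2: "(\<Sum>v\<in>V. (x v)^2) = (\<Sum>v\<in>S. (x v)^2)"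
      unfolding S_def using fin by (intro sum.mono_neutral_right) auto
    have cs: "(\<Sum>v\<in>V. x v)^2 \<le> real (card S) * (\<Sum>v\<in>V. (x v)^2)"
      using cs_sum[OF finS, of x] s1 s2 by simp
    show ?thesis
    proof (cases "card S = 0")
      case True
      then have "S = {}" using finS by simp
      then have "(\<Sum>v\<in>V. x v) = 0" using s1 by simp
      moreover have "0 \<le> (\<Sum>a\<in>V. (x a)^2)" by (simp add: sum_nonneg)
      ultimately show ?thesis using B by (simp add: \<omega>_def[symmetric])
    next
      case False
      let ?T = "(\<Sum>v\<in>V. x v)^2"
      have kp: "real (card S) > 0" using False by simp
      have "?T / real (card S) \<le> (\<Sum>v\<in>V. (x v)^2)"
        using cs kp by (simp add: divide_le_eq mult.commute)
      moreover have "?T / real \<omega> \<le> ?T / real (card S)"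
        using k kp by (intro divide_left_mono) auto
      ultimately have "Bf V E x x \<le> ?T - ?T / real \<omega>" using B by linarith
      then show ?thesis by (simp add: \<omega>_def[symmetric] algebra_simps)
    qed
  next
    case False
    then obtain u v where uS: "u \<in> S" and vS: "v \<in> S" and uv: "u \<noteq> v" and nE: "\<not> E u v"
      unfolding is_clique_def S_def by auto
    have uV: "u \<in> V" and vV: "v \<in> V" using uS vS by (auto simp: S_def)
    define f :: "'a \<Rightarrow> real" where "f = (\<lambda>w. (if w = u then 1 else 0) - (if w = v then 1 else 0))"
    define L where "L = Bf V E x f + Bf V E f x"
    have ff: "Bf V E f f = 0" unfolding f_def using Bf_ff[OF G uV vV] nE by simp
    have Q: "Bf V E (\<lambda>w. x w + t * f w) (\<lambda>w. x w + t * f w) = Bf V E x x + t * L" for t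
      using Bf_expand[of V E x t f x t f] ff by (simp add: L_def algebra_simps)
    have sf: "(\<Sum>w\<in>V. f w) = 0" unfolding f_def using fin uV vV by (simp add: sum_subtractf)
    have gen: "Bf V E x x \<le> (1 - 1 / real \<omega>) * (\<Sum>v\<in>V. x v)^2"
      if t: "t * L \<ge> 0" and nn2: "\<forall>w. x w + t * f w \<ge> 0" and z: "z \<in> S" and zero: "x z + t * f z = 0" for t z
    proof -
      let ?y = "\<lambda>w. x w + t * f w"
      have sub: "{w\<in>V. ?y w \<noteq> 0} \<subseteq> S - {z}"
        using uv zero uS vS by (auto simp: S_def f_def split: if_splits)
      have "card {w\<in>V. ?y w \<noteq> 0} \<le> card (S - {z})" using finS sub by (intro card_mono) auto
      also have "\<dots> < card S" using finS z by (meson card_Diff1_less)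
      finally have lt: "card {w\<in>V. ?y w \<noteq> 0} < card {v\<in>V. x v \<noteq> 0}" by (simp add: S_def)
      have IH: "Bf V E ?y ?y \<le> (1 - 1 / real \<omega>) * (\<Sum>v\<in>V. ?y v)^2"
        using less.hyps[OF lt nn2] by (simp add: \<omega>_def)
      have "(\<Sum>v\<in>V. ?y v) = (\<Sum>v\<in>V. x v)" using sf by (simp add: sum.distrib sum_distrib_left[symmetric])
      then show ?thesis using IH Q[of t] t by simp
    qed
    show ?thesis
    proof (cases "L \<ge> 0")
      case True
      have A1: "x v * L \<ge> 0" using True less.prems by simp
      have A2: "\<forall>w. x w + x v * f w \<ge> 0" using less.prems uv
        by (auto simp: f_def add_nonneg_nonneg)
      have A3: "x v + x v * f v = 0" using uv by (simp add: f_def)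
      show ?thesis using gen[OF A1 A2 vS A3] by (simp add: \<omega>_def)
    next
      case False
      have A1: "(- x u) * L \<ge> 0" using False less.prems
        by (simp add: mult_nonneg_nonpos)
      have A2: "\<forall>w. x w + (- x u) * f w \<ge> 0" using less.prems uv
        by (auto simp: f_def add_nonneg_nonneg) (smt (verit) less.prems)
      have A3: "x u + (- x u) * f u = 0" using uv by (simp add: f_def)
      show ?thesis using gen[OF A1 A2 uS A3] by (simp add: \<omega>_def)
    qed
  qed
qed

lemma Bf_diff:
  "Bf V E (\<lambda>a. p + q * g a) (\<lambda>a. p + q * g a) - Bf V E (\<lambda>a. p - q * g a) (\<lambda>a. p - q * g a)
   = 2 * p * q * (Bf V E (\<lambda>_. 1) g + Bf V E g (\<lambda>_. 1))"
proof -
  have t: "\<And>a b. (if E a b then (p + q * g a) * (p + q * g b) else 0) - (if E a b then (p - q * g a) * (p - q * g b) else 0)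
     = 2 * p * q * ((if E a b then 1 * g b else 0) + (if E a b then g a * 1 else 0))"
    by (simp add: algebra_simps)
  have "Bf V E (\<lambda>a. p + q * g a) (\<lambda>a. p + q * g a) - Bf V E (\<lambda>a. p - q * g a) (\<lambda>a. p - q * g a)
     = (\<Sum>a\<in>V. \<Sum>b\<in>V. (if E a b then (p + q * g a) * (p + q * g b) else 0) - (if E a b then (p - q * g a) * (p - q * g b) else 0))"
    unfolding Bf_def by (simp only: sum_subtractf)
  also have "\<dots> = (\<Sum>a\<in>V. \<Sum>b\<in>V. 2 * p * q * ((if E a b then 1 * g b else 0) + (if E a b then g a * 1 else 0)))"
    by (simp only: t)
  also have "\<dots> = 2 * p * q * (Bf V E (\<lambda>_. 1) g + Bf V E g (\<lambda>_. 1))"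
    unfolding Bf_def by (simp only: sum_distrib_left[symmetric] sum.distrib distrib_left)
  finally show ?thesis .
qed

lemma Bf_one:
  assumes G: "simple_graph V E"
  shows "Bf V E g (\<lambda>_. 1) = (\<Sum>a\<in>V. g a * real (degree V E a))"
    and "Bf V E (\<lambda>_. 1) g = (\<Sum>a\<in>V. g a * real (degree V E a))"
proof -
  have fin: "finite V" using G by (simp add: simple_graph_def)
  have sym: "\<And>a b. E a b \<Longrightarrow> E b a" using G by (auto simp: simple_graph_def)
  have i: "(\<Sum>b\<in>V. if E a b then g a * 1 else 0) = g a * real (degree V E a)" for a
  proof -
    show ?thesis using fin by (simp add: sum.inter_filter[symmetric] degree_def mult.commute)
  qed
  show 1: "Bf V E g (\<lambda>_. 1) = (\<Sum>a\<in>V. g a * real (degree V E a))"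
    unfolding Bf_def using i by simp
  show "Bf V E (\<lambda>_. 1) g = (\<Sum>a\<in>V. g a * real (degree V E a))"
    using 1 Bf_sym[of E V] sym by metis
qed

lemma Bf_abs:
  "- Bf V E w w \<le> Bf V E (\<lambda>a. \<bar>w a\<bar>) (\<lambda>a. \<bar>w a\<bar>)"
proof -
  have "- Bf V E w w = (\<Sum>a\<in>V. \<Sum>b\<in>V. if E a b then - (w a * w b) else 0)"
    unfolding Bf_def by (simp add: sum_negf[symmetric] if_distrib cong: if_cong)
  also have "\<dots> \<le> Bf V E (\<lambda>a. \<bar>w a\<bar>) (\<lambda>a. \<bar>w a\<bar>)"
    unfolding Bf_def by (intro sum_mono) (auto simp: abs_mult[symmetric])
  finally show ?thesis .
qed

lemma regular_part:
  assumes G: "simple_graph V E" and ne: "V \<noteq> {}"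
    and hyp: "real (clique_number V E) = real (card V) / (real (card V) - quad_mean_degree V E)"
  shows "\<forall>a\<in>V. real (degree V E a) = real (card V) - real (card V) / real (clique_number V E)"
proof -
  have fin: "finite V" using G by (simp add: simple_graph_def)
  define n where "n = real (card V)"
  have npos: "n > 0" using fin ne by (simp add: n_def card_gt_0_iff)
  define \<omega> where "\<omega> = real (clique_number V E)"
  have om1: "\<omega> \<ge> 1" using clique_ge1[OF G ne] by (simp add: \<omega>_def)
  define dd where "dd = (\<lambda>a. real (degree V E a))"
  define D where "D = (\<Sum>a\<in>V. (dd a)^2)"
  define \<sigma> where "\<sigma> = quad_mean_degree V E"
  have \<sigma>def: "\<sigma> = sqrt (D / n)" by (simp add: \<sigma>_def quad_mean_degree_def D_def dd_def n_def)
  have D0: "D \<ge> 0" unfolding D_def by (simp add: sum_nonneg)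
  have hyp2: "\<omega> = n / (n - \<sigma>)" using hyp by (simp add: \<omega>_def n_def \<sigma>_def)
  have nz: "n - \<sigma> \<noteq> 0" using hyp2 om1 by auto
  have "\<omega> * (n - \<sigma>) = n" using hyp2 nz by simp
  define c where "c = 1 - 1 / \<omega>"
  have "\<omega> * c = \<omega> - 1" using om1 by (simp add: c_def field_simps)
  then have "(\<omega> * c) * n = (\<omega> - 1) * n" by simp
  then have "\<omega> * \<sigma> = \<omega> * (c * n)" using \<open>\<omega> * (n - \<sigma>) = n\<close> by (auto simp: algebra_simps)
  then have sigc: "\<sigma> = c * n" using om1 by simp
  have c0: "c \<ge> 0" using om1 by (simp add: c_def)
  have "\<sigma>^2 = D / n" using \<sigma>def D0 npos by simp
  then have Dval: "D = c^2 * n^3" using sigc npos by (simp add: field_simps power2_eq_square power3_eq_cube)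
  have dd0: "\<And>a. dd a \<ge> 0" by (simp add: dd_def)
  have conc: "\<forall>a\<in>V. dd a = c * n"
  proof (cases "c = 0")
    case True
    then have "D = 0" using Dval by simp
    then have "\<forall>a\<in>V. (dd a)^2 = 0" unfolding D_def using fin by (subst (asm) sum_nonneg_eq_0_iff) auto
    then show ?thesis using True by simp
  next
    case False
    then have cpos: "c > 0" using c0 by simp
    define q where "q = sqrt n"
    define p where "p = c * n * q"
    have q2: "q^2 = n" using npos by (simp add: q_def)
    have qpos: "q > 0" using npos by (simp add: q_def)
    have p0: "p \<ge> 0" using c0 npos qpos by (simp add: p_def)
    define u where "u = (\<lambda>a. p + q * dd a)"
    define w where "w = (\<lambda>a. p - q * dd a)"
    have BD: "Bf V E (\<lambda>_. 1) dd = D" "Bf V E dd (\<lambda>_. 1) = D"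
      using Bf_one[OF G, of dd] by (simp_all add: D_def dd_def power2_eq_square)
    have diff: "Bf V E u u - Bf V E w w = 4 * p * q * D"
      using Bf_diff[of V E p q dd] BD by (simp add: u_def w_def)
    have sq: "(\<Sum>a\<in>V. (u a)^2) + (\<Sum>a\<in>V. (w a)^2) = 2 * p^2 * n + 2 * q^2 * D"
    proof -
      have "(\<Sum>a\<in>V. (u a)^2) + (\<Sum>a\<in>V. (w a)^2) = (\<Sum>a\<in>V. 2 * p^2 + 2 * q^2 * (dd a)^2)"
        by (simp add: sum.distrib[symmetric] u_def w_def power2_eq_square algebra_simps)
      also have "\<dots> = 2 * p^2 * n + 2 * q^2 * D"
        by (simp add: sum.distrib D_def n_def sum_distrib_left)
      finally show ?thesis .
    qed
    have u0: "\<forall>a. u a \<ge> 0" using p0 qpos dd0 by (simp add: u_def)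
    have b1: "Bf V E u u \<le> c * (\<Sum>a\<in>V. u a)^2" using MS[OF G ne u0] by (simp add: c_def \<omega>_def)
    have b2: "c * (\<Sum>a\<in>V. u a)^2 \<le> c * n * (\<Sum>a\<in>V. (u a)^2)"
      using cs_sum[OF fin, of u] c0 by (simp add: n_def mult_left_mono mult.assoc)
    have wa0: "\<forall>a. \<bar>w a\<bar> \<ge> 0" by simp
    have b3: "- Bf V E w w \<le> c * (\<Sum>a\<in>V. \<bar>w a\<bar>)^2"
      using MS[OF G ne wa0] Bf_abs[of V E w] by (simp add: c_def \<omega>_def)
    have b4: "c * (\<Sum>a\<in>V. \<bar>w a\<bar>)^2 \<le> c * n * (\<Sum>a\<in>V. (w a)^2)"
      using cs_sum[OF fin, of "\<lambda>a. \<bar>w a\<bar>"] c0 by (simp add: n_def mult_left_mono mult.assoc)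
    have p2: "p^2 = D" using Dval q2 by (simp add: p_def power_mult_distrib power3_eq_cube power2_eq_square)
    have pq: "p * q = c * n * n" using q2 by (simp add: p_def power2_eq_square)
    have "c * n * ((\<Sum>a\<in>V. (u a)^2) + (\<Sum>a\<in>V. (w a)^2)) = 4 * p * q * D"
      using sq p2 q2 pq by (simp add: algebra_simps)
    then have "c * n * (\<Sum>a\<in>V. (u a)^2) + c * n * (\<Sum>a\<in>V. (w a)^2) = 4 * p * q * D"
      by (simp only: distrib_left)
    then have eqc: "c * (\<Sum>a\<in>V. u a)^2 = c * n * (\<Sum>a\<in>V. (u a)^2)"
      using diff b1 b2 b3 b4 by linarith
    then have eq: "(\<Sum>a\<in>V. u a)^2 = n * (\<Sum>a\<in>V. (u a)^2)" using cpos by simp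
    define m where "m = (\<Sum>b\<in>V. u b) / real (card V)"
    have "n * (\<Sum>a\<in>V. (u a - m)^2) = 0"
      using var_id[OF fin ne, of u] eq by (simp add: n_def m_def)
    then have "(\<Sum>a\<in>V. (u a - m)^2) = 0" using npos by simp
    then have um: "\<forall>a\<in>V. u a = m" using fin by (subst (asm) sum_nonneg_eq_0_iff) auto
    define r where "r = (m - p) / q"
    have ddr: "\<forall>a\<in>V. dd a = r" using um qpos by (auto simp: u_def r_def field_simps)
    have "D = n * r^2" unfolding D_def using ddr by (simp add: n_def)
    then have "r^2 = (c * n)^2" using Dval npos by (simp add: power2_eq_square power3_eq_cube field_simps)
    moreover obtain a0 where "a0 \<in> V" using ne by auto
    then have "r \<ge> 0" using ddr dd0 by metis
    ultimately have "r = c * n" using c0 npos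
      by (metis mult_nonneg_nonneg less_imp_le power2_eq_iff_nonneg)
    then show ?thesis using ddr by simp
  qed
  show ?thesis using conc by (simp add: dd_def c_def n_def \<omega>_def algebra_simps)
qed

definition Nc :: "'a set \<Rightarrow> ('a \<Rightarrow> 'a \<Rightarrow> bool) \<Rightarrow> 'a \<Rightarrow> 'a set" where
  "Nc V E a = {b\<in>V. \<not> E a b}"

lemma greedy:
  assumes G: "simple_graph V E"
  shows "W \<subseteq> V \<Longrightarrow> (\<forall>a\<in>W. card (W \<inter> Nc V E a) \<le> k) \<Longrightarrow>
         \<exists>C\<subseteq>W. is_clique V E C \<and> card W \<le> k * card C"
proof (induction "card W" arbitrary: W rule: less_induct)
  case less
  have fin: "finite V" using G by (simp add: simple_graph_def)
  have sym: "\<And>a b. E a b \<Longrightarrow> E b a" and irr: "\<And>a. \<not> E a a"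
    using G by (auto simp: simple_graph_def)
  have finW: "finite W" using less.prems(1) fin by (rule finite_subset)
  show ?case
  proof (cases "W = {}")
    case True
    then show ?thesis by (auto simp: is_clique_def)
  next
    case False
    then obtain a where aW: "a \<in> W" by auto
    define W' where "W' = W - Nc V E a"
    have aN: "a \<in> Nc V E a" using aW less.prems(1) irr by (auto simp: Nc_def)
    have sub: "W' \<subseteq> W" by (auto simp: W'_def)
    have aW': "a \<notin> W'" using aN by (simp add: W'_def)
    have "W' \<subset> W" using sub aW aW' by blast
    then have lt: "card W' < card W" using finW by (rule psubset_card_mono[rotated])
    have hyp: "\<forall>b\<in>W'. card (W' \<inter> Nc V E b) \<le> k"
    proof
      fix b assume "b \<in> W'"
      then have "card (W' \<inter> Nc V E b) \<le> card (W \<inter> Nc V E b)"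
        using finW sub by (intro card_mono) auto
      then show "card (W' \<inter> Nc V E b) \<le> k" using less.prems(2) \<open>b \<in> W'\<close> sub by force
    qed
    obtain C' where C': "C' \<subseteq> W'" "is_clique V E C'" "card W' \<le> k * card C'"
      using less.hyps[OF lt _ hyp] sub less.prems(1) by blast
    have cW: "card W = card W' + card (W \<inter> Nc V E a)"
    proof -
      have "W = W' \<union> (W \<inter> Nc V E a)" by (auto simp: W'_def)
      moreover have "W' \<inter> (W \<inter> Nc V E a) = {}" by (auto simp: W'_def)
      ultimately show ?thesis using finW
        by (metis card_Un_disjoint finite_Int finite_subset sub)
    qed
    have adj: "\<And>b. b \<in> W' \<Longrightarrow> E a b" using less.prems(1) by (auto simp: W'_def Nc_def)
    have cl: "is_clique V E (insert a C')"
      using C'(1,2) adj sym aW less.prems(1) unfolding is_clique_def by blast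
    have "finite C'" using C'(1) finW sub by (meson finite_subset)
    moreover have "a \<notin> C'" using aW' C'(1) by blast
    ultimately have "card (insert a C') = card C' + 1" by simp
    moreover have "card (W \<inter> Nc V E a) \<le> k" using less.prems(2) aW by blast
    ultimately have "card W \<le> k * card (insert a C')" using cW C'(3) by (simp add: algebra_simps)
    moreover have "insert a C' \<subseteq> W" using aW C'(1) sub by blast
    ultimately show ?thesis using cl by blast
  qed
qed

lemma greedy2:
  assumes G: "simple_graph V E" and WV: "W \<subseteq> V"
    and h: "\<forall>a\<in>W. card (W \<inter> Nc V E a) \<le> k"
    and a0: "a0 \<in> W" and lt: "card (W \<inter> Nc V E a0) < k"
  shows "\<exists>C\<subseteq>W. is_clique V E C \<and> card W < k * card C"
proof -
  have fin: "finite V" using G by (simp add: simple_graph_def)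
  have sym: "\<And>a b. E a b \<Longrightarrow> E b a" and irr: "\<And>a. \<not> E a a"
    using G by (auto simp: simple_graph_def)
  have finW: "finite W" using WV fin by (rule finite_subset)
  define W' where "W' = W - Nc V E a0"
  have aN: "a0 \<in> Nc V E a0" using a0 WV irr by (auto simp: Nc_def)
  have sub: "W' \<subseteq> W" by (auto simp: W'_def)
  have aW': "a0 \<notin> W'" using aN by (simp add: W'_def)
  have hyp: "\<forall>b\<in>W'. card (W' \<inter> Nc V E b) \<le> k"
  proof
    fix b assume "b \<in> W'"
    then have "card (W' \<inter> Nc V E b) \<le> card (W \<inter> Nc V E b)"
      using finW sub by (intro card_mono) auto
    then show "card (W' \<inter> Nc V E b) \<le> k" using h \<open>b \<in> W'\<close> sub by force
  qed
  obtain C' where C': "C' \<subseteq> W'" "is_clique V E C'" "card W' \<le> k * card C'"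
    using greedy[OF G _ hyp] sub WV by blast
  have cW: "card W = card W' + card (W \<inter> Nc V E a0)"
  proof -
    have "W = W' \<union> (W \<inter> Nc V E a0)" by (auto simp: W'_def)
    moreover have "W' \<inter> (W \<inter> Nc V E a0) = {}" by (auto simp: W'_def)
    ultimately show ?thesis using finW
      by (metis card_Un_disjoint finite_Int finite_subset sub)
  qed
  have adj: "\<And>b. b \<in> W' \<Longrightarrow> E a0 b" using WV by (auto simp: W'_def Nc_def)
  have cl: "is_clique V E (insert a0 C')"
    using C'(1,2) adj sym a0 WV unfolding is_clique_def by blast
  have "finite C'" using C'(1) finW sub by (meson finite_subset)
  moreover have "a0 \<notin> C'" using aW' C'(1) by blast
  ultimately have "card (insert a0 C') = card C' + 1" by simp
  then have "card W < k * card (insert a0 C')" using cW C'(3) lt by (simp add: algebra_simps)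
  moreover have "insert a0 C' \<subseteq> W" using a0 C'(1) sub by blast
  ultimately show ?thesis using cl by blast
qed

lemma card_Nc:
  assumes G: "simple_graph V E" and reg: "\<forall>a\<in>V. degree V E a = r" and a: "a \<in> V"
  shows "card (Nc V E a) = card V - r"
proof -
  have fin: "finite V" using G by (simp add: simple_graph_def)
  have "Nc V E a = V - {b\<in>V. E a b}" by (auto simp: Nc_def)
  then show ?thesis using fin reg a by (simp add: card_Diff_subset degree_def)
qed

lemma trans_nonadj:
  assumes G: "simple_graph V E" and reg: "\<forall>a\<in>V. degree V E a = r"
    and nk: "card V = clique_number V E * k" and r: "r = card V - k" and kV: "k \<le> card V"
    and xV: "x \<in> V" and yV: "y \<in> V" and zV: "z \<in> V"
    and xy: "\<not> E x y" and yz: "\<not> E y z"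
  shows "\<not> E x z"
proof
  assume xz: "E x z"
  have fin: "finite V" using G by (simp add: simple_graph_def)
  have sym: "\<And>a b. E a b \<Longrightarrow> E b a" and irr: "\<And>a. \<not> E a a"
    using G by (auto simp: simple_graph_def)
  define \<omega> where "\<omega> = clique_number V E"
  define W where "W = {b\<in>V. E x b}"
  have WV: "W \<subseteq> V" by (auto simp: W_def)
  have finW: "finite W" using WV fin by (rule finite_subset)
  have cNc: "\<And>a. a \<in> V \<Longrightarrow> card (Nc V E a) = k"
    using card_Nc[OF G reg] r kV by simp
  have h: "\<forall>a\<in>W. card (W \<inter> Nc V E a) \<le> k"
  proof
    fix a assume "a \<in> W"
    then have "card (W \<inter> Nc V E a) \<le> card (Nc V E a)" by (intro card_mono) (auto simp: Nc_def fin)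
    then show "card (W \<inter> Nc V E a) \<le> k" using cNc \<open>a \<in> W\<close> WV by auto
  qed
  have zW: "z \<in> W" using xz zV by (simp add: W_def)
  have "W \<inter> Nc V E z \<subseteq> Nc V E z - {y}" using xy by (auto simp: W_def)
  then have "card (W \<inter> Nc V E z) \<le> card (Nc V E z - {y})" by (intro card_mono) (auto simp: Nc_def fin)
  also have "\<dots> = k - 1"
  proof -
    have "y \<in> Nc V E z" using yV yz sym by (auto simp: Nc_def)
    then show ?thesis using cNc[OF zV] by (simp add: card_Diff_singleton)
  qed
  finally have le1: "card (W \<inter> Nc V E z) \<le> k - 1" .
  have "z \<in> Nc V E z" using zV irr by (simp add: Nc_def)
  then have "Nc V E z \<noteq> {}" by auto
  then have "card (Nc V E z) > 0" using fin by (simp add: Nc_def card_gt_0_iff)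
  then have lt: "card (W \<inter> Nc V E z) < k" using le1 cNc[OF zV] by linarith
  obtain C where C: "C \<subseteq> W" "is_clique V E C" "card W < k * card C"
    using greedy2[OF G WV h zW lt] by blast
  have cardW: "card W = r" using reg xV by (simp add: degree_def W_def)
  have "card W = (\<omega> - 1) * k" using cardW r nk by (simp add: \<omega>_def algebra_simps diff_mult_distrib)
  then have "(\<omega> - 1) * k < card C * k" using C(3) by (simp add: mult.commute)
  then have "\<omega> - 1 < card C" by (meson mult_less_cancel2)
  then have big: "\<omega> < card C + 1" by linarith
  have xC: "x \<notin> C" using C(1) irr by (auto simp: W_def)
  have cl: "is_clique V E (insert x C)" using C(1,2) xV sym unfolding is_clique_def W_def by blast
  have "finite C" using C(1) finW by (rule finite_subset)
  then have "card (insert x C) = card C + 1" using xC by simp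
  then have "card (insert x C) > \<omega>" using big by simp
  moreover have "card (insert x C) \<le> \<omega>" using clique_le[OF G cl] by (simp add: \<omega>_def)
  ultimately show False by simp
qed

theorem corollary4p4:
  fixes V :: "'a set" and E :: "'a \<Rightarrow> 'a \<Rightarrow> bool"
  assumes "simple_graph V E"
    and "V \<noteq> {}"
    and "real (clique_number V E) = real (card V) / (real (card V) - quad_mean_degree V E)"
  shows "regular V E \<and> complete_multipartite V E (clique_number V E)"
proof -
  note G = assms(1) and ne = assms(2)
  have fin: "finite V" using G by (simp add: simple_graph_def)
  have sym: "\<And>a b. E a b \<Longrightarrow> E b a" and irr: "\<And>a. \<not> E a a"
    using G by (auto simp: simple_graph_def)
  define \<omega> where "\<omega> = clique_number V E"
  have om1: "1 \<le> \<omega>" using clique_ge1[OF G ne] by (simp add: \<omega>_def)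
  have rp: "\<forall>a\<in>V. real (degree V E a) = real (card V) - real (card V) / real \<omega>"
    using regular_part[OF assms] by (simp add: \<omega>_def)
  obtain v0 where v0: "v0 \<in> V" using ne by auto
  define r where "r = degree V E v0"
  have reg: "\<forall>a\<in>V. degree V E a = r"
  proof
    fix a assume "a \<in> V"
    then have "real (degree V E a) = real (degree V E v0)" using rp v0 by simp
    then show "degree V E a = r" by (simp add: r_def)
  qed
  have rle: "r \<le> card V"
  proof -
    have "{b\<in>V. E v0 b} \<subseteq> V" by auto
    then show ?thesis using fin by (simp add: r_def degree_def card_mono)
  qed
  define k where "k = card V - r"
  have "real r = real (card V) - real (card V) / real \<omega>" using rp v0 by (simp add: r_def)
  then have "real (card V) / real \<omega> = real k" using rle by (simp add: k_def of_nat_diff)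
  then have "real (card V) = real \<omega> * real k" using om1 by (simp add: field_simps)
  then have "real (card V) = real (\<omega> * k)" by simp
  then have nk: "card V = \<omega> * k" by (simp only: of_nat_eq_iff)
  have kV: "k \<le> card V" by (simp add: k_def)
  have r2: "r = card V - k" using rle by (simp add: k_def)
  have "card V > 0" using fin ne card_gt_0_iff by blast
  then have "0 < \<omega> * k" using nk by simp
  then have kpos: "k > 0" by simp
  have nk': "card V = clique_number V E * k" using nk by (simp add: \<omega>_def)
  have tr: "\<And>x y z. x \<in> V \<Longrightarrow> y \<in> V \<Longrightarrow> z \<in> V \<Longrightarrow> \<not> E x y \<Longrightarrow> \<not> E y z \<Longrightarrow> \<not> E x z"
    using trans_nonadj[OF G reg nk' r2 kV] by blast
  have NcEq: "Nc V E x = Nc V E y" if "x \<in> V" "y \<in> V" "\<not> E x y" for x y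
  proof -
    have "\<not> E y x" using that sym by blast
    then show ?thesis using that tr unfolding Nc_def by blast
  qed
  have cNc: "\<And>a. a \<in> V \<Longrightarrow> card (Nc V E a) = k"
    using card_Nc[OF G reg] by (simp add: k_def)
  define P where "P = Nc V E ` V"
  have inself: "\<And>a. a \<in> V \<Longrightarrow> a \<in> Nc V E a" using irr by (simp add: Nc_def)
  have UP: "\<Union>P = V" using inself by (auto simp: P_def Nc_def)
  have part: "partition_on V P"
  proof (rule partition_onI)
    show "\<Union>P = V" by (rule UP)
    show "{} \<notin> P" using inself by (auto simp: P_def)
    fix p q assume "p \<in> P" "q \<in> P" "p \<noteq> q"
    then obtain a b where ab: "a \<in> V" "b \<in> V" "p = Nc V E a" "q = Nc V E b" by (auto simp: P_def)
    show "disjnt p q"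
    proof (rule ccontr)
      assume "\<not> disjnt p q"
      then obtain c where c: "c \<in> V" "\<not> E a c" "\<not> E b c" using ab by (auto simp: disjnt_def Nc_def)
      have "\<not> E c b" using c sym by blast
      then have "\<not> E a b" using tr ab c by blast
      then have "p = q" using NcEq ab by simp
      then show False using \<open>p \<noteq> q\<close> by simp
    qed
  qed
  have finP: "finite P" using fin by (simp add: P_def)
  have disj: "\<forall>c1\<in>P. \<forall>c2\<in>P. c1 \<noteq> c2 \<longrightarrow> c1 \<inter> c2 = {}"
    using part unfolding partition_on_def disjoint_def by blast
  have "k * card P = card (\<Union>P)"
  proof -
    have cP: "\<forall>c\<in>P. card c = k" using cNc by (auto simp: P_def)
    show ?thesis
      apply (rule card_partition[OF finP])
      using UP fin apply simp
      using cP apply blast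
      using disj apply blast
      done
  qed
  then have "k * card P = \<omega> * k" using UP nk by simp
  then have cardP: "card P = \<omega>" using kpos by simp
  have indep: "\<forall>X\<in>P. \<forall>x\<in>X. \<forall>y\<in>X. \<not> E x y"
  proof (intro ballI)
    fix X x y assume "X \<in> P" "x \<in> X" "y \<in> X"
    then obtain a where a: "a \<in> V" "X = Nc V E a" by (auto simp: P_def)
    then have "\<not> E a x" "\<not> E a y" "x \<in> V" "y \<in> V" using \<open>x \<in> X\<close> \<open>y \<in> X\<close> by (auto simp: Nc_def)
    then show "\<not> E x y" using tr a sym by blast
  qed
  have cross: "\<forall>X\<in>P. \<forall>Y\<in>P. X \<noteq> Y \<longrightarrow> (\<forall>x\<in>X. \<forall>y\<in>Y. E x y)"
  proof (intro ballI impI)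
    fix X Y x y assume "X \<in> P" "Y \<in> P" "X \<noteq> Y" "x \<in> X" "y \<in> Y"
    then obtain a b where ab: "a \<in> V" "X = Nc V E a" "b \<in> V" "Y = Nc V E b" by (auto simp: P_def)
    then have xy: "\<not> E a x" "\<not> E b y" "x \<in> V" "y \<in> V" using \<open>x \<in> X\<close> \<open>y \<in> Y\<close> by (auto simp: Nc_def)
    show "E x y"
    proof (rule ccontr)
      assume "\<not> E x y"
      then have "Nc V E x = Nc V E y" using NcEq xy by simp
      moreover have "Nc V E a = Nc V E x" using NcEq xy ab by simp
      moreover have "Nc V E b = Nc V E y" using NcEq xy ab by simp
      ultimately show False using \<open>X \<noteq> Y\<close> ab by simp
    qed
  qed
  have "regular V E" unfolding regular_def using reg by blast
  moreover have "complete_multipartite V E (clique_number V E)"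
    unfolding complete_multipartite_def \<omega>_def[symmetric] using part cardP indep cross by blast
  ultimately show ?thesis by simp
qed

end
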